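(* Let $\mathfrak k$ be a Hilbert–Lie algebra, $\phi$ an automorphism of $\mathfrak k$ of finite order, and $\mathfrak t\subseteq\mathfrak k^\phi$ a maximal abelian subalgebra of the fixed point algebra. Then the centralizer $\mathfrak t_{\mathfrak k}:=\mathfrak z_{\mathfrak k}(\mathfrak t)=\{x\in\mathfrak k:[x,\mathfrak t]=0\}$ is a maximal abelian subalgebra of $\mathfrak k$.
   Context: A Hilbert–Lie algebra is a real Lie algebra with Hilbert space structure such that $\langle[x,y],z\rangle=\langle x,[y,z]\rangle$. Automorphisms are isometric Lie algebra automorphisms; $\mathfrak k^\phi=\{x\in\mathfrak k:\phi(x)=x\}$. *)

theory Defs
  imports "HOL-Analysis.Analysis"
begin

definition hilbert_lie :: "('a::{real_inner,complete_space} \<Rightarrow> 'a \<Rightarrow> 'a) \<Rightarrow> bool" where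
  "hilbert_lie br \<longleftrightarrow>
     bilinear br \<and>
     (\<forall>x. br x x = 0) \<and>
     (\<forall>x y z. br x (br y z) + br y (br z x) + br z (br x y) = 0) \<and>
     (\<forall>x y z. inner (br x y) z = inner x (br y z))"

definition hl_automorphism :: "('a::{real_inner,complete_space} \<Rightarrow> 'a \<Rightarrow> 'a) \<Rightarrow> ('a \<Rightarrow> 'a) \<Rightarrow> bool" where
  "hl_automorphism br \<phi> \<longleftrightarrow>
     linear \<phi> \<and> bij \<phi> \<and>
     (\<forall>x y. inner (\<phi> x) (\<phi> y) = inner x y) \<and>
     (\<forall>x y. \<phi> (br x y) = br (\<phi> x) (\<phi> y))"

definition finite_order :: "('a \<Rightarrow> 'a) \<Rightarrow> bool" where
  "finite_order \<phi> \<longleftrightarrow> (\<exists>n::nat. n > 0 \<and> \<phi> ^^ n = id)"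

definition fixed_points :: "('a \<Rightarrow> 'a) \<Rightarrow> 'a set" where
  "fixed_points \<phi> = {x. \<phi> x = x}"

definition lie_subalgebra :: "('a::real_vector \<Rightarrow> 'a \<Rightarrow> 'a) \<Rightarrow> 'a set \<Rightarrow> bool" where
  "lie_subalgebra br S \<longleftrightarrow> subspace S \<and> (\<forall>x\<in>S. \<forall>y\<in>S. br x y \<in> S)"

definition abelian_subalgebra :: "('a::real_vector \<Rightarrow> 'a \<Rightarrow> 'a) \<Rightarrow> 'a set \<Rightarrow> bool" where
  "abelian_subalgebra br S \<longleftrightarrow> lie_subalgebra br S \<and> (\<forall>x\<in>S. \<forall>y\<in>S. br x y = 0)"

definition maximal_abelian_in :: "('a::real_vector \<Rightarrow> 'a \<Rightarrow> 'a) \<Rightarrow> 'a set \<Rightarrow> 'a set \<Rightarrow> bool" where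
  "maximal_abelian_in br L t \<longleftrightarrow>
     abelian_subalgebra br t \<and> t \<subseteq> L \<and>
     (\<forall>s. abelian_subalgebra br s \<and> t \<subseteq> s \<and> s \<subseteq> L \<longrightarrow> s = t)"

definition centralizer :: "('a::real_vector \<Rightarrow> 'a \<Rightarrow> 'a) \<Rightarrow> 'a set \<Rightarrow> 'a set" where
  "centralizer br t = {x. \<forall>y\<in>t. br x y = 0}"

end

theory Submission
  imports Defs "HOL-Computational_Algebra.Primes"
begin


lemma coprime_lift:
  fixes j k N :: nat
  assumes cp: "coprime j k" and N: "N > 0"
  defines "r \<equiv> \<Prod>{p \<in> prime_factors N. \<not> p dvd j}"
  shows "coprime (j + r * k) N"
proof (rule ccontr)
  assume "\<not> coprime (j + r * k) N"
  then have "gcd (j + r*k) N \<noteq> 1" by (simp add: coprime_iff_gcd_eq_1)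
  then obtain p where p: "prime p" "p dvd gcd (j + r*k) N" using prime_factor_nat by blast
  then have pw: "p dvd j + r*k" and pN: "p dvd N" by auto
  have fin: "finite {p \<in> prime_factors N. \<not> p dvd j}" by simp
  show False
  proof (cases "p dvd j")
    case True
    then have "p dvd r * k" using pw by (simp add: dvd_add_right_iff)
    then have "p dvd r \<or> p dvd k" using p(1) prime_dvd_mult_iff by blast
    moreover have "\<not> p dvd r"
    proof
      assume "p dvd r"
      then obtain q where "q \<in> {p \<in> prime_factors N. \<not> p dvd j}" "p dvd q"
        unfolding r_def using prime_dvd_prod_iff[OF fin p(1)] by auto
      then have "q = p" using p(1) by (auto simp: in_prime_factors_iff primes_dvd_imp_eq[symmetric])
      with True show False using \<open>q \<in> _\<close> by auto
    qed
    moreover have "\<not> p dvd k" using True cp p(1)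
      by (metis coprime_common_divisor_nat not_prime_1)
    ultimately show False by blast
  next
    case False
    have "p \<in> {p \<in> prime_factors N. \<not> p dvd j}" using False p(1) pN N
      by (auto simp: in_prime_factors_iff)
    then have "p dvd r" unfolding r_def using dvd_prodI[OF fin, of p "\<lambda>x. x"] by simp
    then have "p dvd r * k" by simp
    then have "p dvd j" using pw by (simp add: dvd_add_left_iff)
    with False show False by simp
  qed
qed

lemma NT:
  fixes k j N :: nat
  assumes N: "N > 0"
  shows "\<exists>m m'. N dvd k + m' * (j + m * k)"
proof (cases "k = 0")
  case True then show ?thesis by (intro exI[of _ 0]) simp
next
  case False
  define g where "g = gcd j k"
  have g0: "g > 0" using False by (simp add: g_def)
  obtain j' k' where jk: "j = g * j'" "k = g * k'" "coprime j' k'"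
    using gcd_coprime_exists[of j k] g0 unfolding g_def by (metis mult.commute neq0_conv)
  define r where "r = \<Prod>{p \<in> prime_factors N. \<not> p dvd j'}"
  have cw: "coprime (j' + r * k') N" using coprime_lift[OF jk(3) N] unfolding r_def by simp
  show ?thesis
  proof (cases "j' + r * k' = 0")
    case True
    then have "N = 1" using cw unfolding True by simp
    then show ?thesis by simp
  next
    case False
    then obtain x y where xy: "(j' + r * k') * x = N * y + gcd (j' + r * k') N"
      using bezout_nat by blast
    then have xy: "(j' + r * k') * x = N * y + 1" using cw by simp
    obtain n0 where n0: "N = Suc n0" using N by (cases N) auto
    define m' where "m' = x * n0 * k'"
    have "k' + m' * (j' + r * k') = k' + n0 * k' * ((j' + r * k') * x)"
      by (simp add: m'_def algebra_simps)
    also have "\<dots> = k' + n0 * k' + n0 * k' * N * y" unfolding xy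
      by (simp add: algebra_simps)
    also have "\<dots> = N * (k' + n0 * k' * y)" unfolding n0 by (simp add: algebra_simps)
    finally have "N dvd k' + m' * (j' + r * k')" by simp
    then have "N dvd g * (k' + m' * (j' + r * k'))" by simp
    then show ?thesis using jk by (intro exI[of _ r] exI[of _ m']) (simp add: algebra_simps)
  qed
qed


locale HLA =
  fixes br :: "'a::real_inner \<Rightarrow> 'a \<Rightarrow> 'a"
  assumes bil: "bilinear br"
    and alt: "\<And>x. br x x = 0"
    and jac: "\<And>x y z. br x (br y z) + br y (br z x) + br z (br x y) = 0"
    and inv: "\<And>x y z. inner (br x y) z = inner x (br y z)"
begin

lemmas pe = prod_eq_iff zero_prod_def

lemmas brs = bilinear_ladd[OF bil] bilinear_radd[OF bil] bilinear_lmul[OF bil] bilinear_rmul[OF bil]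
  bilinear_lneg[OF bil] bilinear_rneg[OF bil] bilinear_lzero[OF bil] bilinear_rzero[OF bil]
  bilinear_lsub[OF bil] bilinear_rsub[OF bil]

lemma anti: "br y x = - br x y"
proof -
  have "0 = br (x+y) (x+y)" by (simp only: alt)
  also have "\<dots> = br x x + br x y + (br y x + br y y)" by (simp add: brs)
  also have "\<dots> = br x y + br y x" by (simp add: alt)
  finally have "br x y + br y x = 0" by simp
  then show ?thesis by (simp add: eq_neg_iff_add_eq_0 add.commute)
qed

lemma deriv: "br x (br y z) = br (br x y) z + br y (br x z)"
proof -
  have "br x (br y z) + br y (br z x) + br z (br x y) = 0" by (rule jac)
  moreover have "br y (br z x) = - br y (br x z)" by (subst anti) (simp add: brs)
  moreover have "br z (br x y) = - br (br x y) z" by (rule anti)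
  ultimately show ?thesis by (simp add: algebra_simps eq_neg_iff_add_eq_0)
qed

lemma skew: "inner (br x y) z = - inner y (br x z)"
  by (subst anti) (simp add: inv)

definition cb :: "'a \<times> 'a \<Rightarrow> 'a \<times> 'a \<Rightarrow> 'a \<times> 'a" where
  "cb a b = (br (fst a) (fst b) - br (snd a) (snd b), br (fst a) (snd b) + br (snd a) (fst b))"
definition J :: "'a \<times> 'a \<Rightarrow> 'a \<times> 'a" where "J a = (- snd a, fst a)"
definition cj :: "'a \<times> 'a \<Rightarrow> 'a \<times> 'a" where "cj a = (fst a, - snd a)"
definition sc :: "complex \<Rightarrow> 'a \<times> 'a \<Rightarrow> 'a \<times> 'a" where "sc z a = Re z *\<^sub>R a + Im z *\<^sub>R J a"

lemma cb_ladd: "cb (a + b) c = cb a c + cb b c"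
  by (simp add: cb_def brs algebra_simps)
lemma cb_radd: "cb a (b + c) = cb a b + cb a c"
  by (simp add: cb_def brs algebra_simps)
lemma cb_lscale: "cb (r *\<^sub>R a) c = r *\<^sub>R cb a c"
  by (simp add: cb_def brs algebra_simps)
lemma cb_rscale: "cb a (r *\<^sub>R c) = r *\<^sub>R cb a c"
  by (simp add: cb_def brs algebra_simps)
lemma cb_lzero: "cb 0 c = 0" by (simp add: cb_def brs pe)
lemma cb_rzero: "cb c 0 = 0" by (simp add: cb_def brs pe)
lemma cb_lJ: "cb (J a) b = J (cb a b)"
  by (simp add: cb_def J_def brs algebra_simps)
lemma cb_rJ: "cb a (J b) = J (cb a b)"
  by (simp add: cb_def J_def brs algebra_simps)
lemma J_add: "J (a + b) = J a + J b" by (simp add: J_def)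
lemma J_scale: "J (r *\<^sub>R a) = r *\<^sub>R J a" by (simp add: J_def)
lemma J_J: "J (J a) = - a" by (simp add: J_def pe)
lemma cb_lsc: "cb (sc z a) b = sc z (cb a b)"
  by (simp add: sc_def cb_ladd cb_lscale cb_lJ)
lemma cb_rsc: "cb a (sc z b) = sc z (cb a b)"
  by (simp add: sc_def cb_radd cb_rscale cb_rJ)
lemma cb_anti: "cb b a = - cb a b"
  by (simp add: cb_def anti[of "fst a"] anti[of "snd a"] algebra_simps)
lemma cb_deriv: "cb a (cb b c) = cb (cb a b) c + cb b (cb a c)"
  by (simp add: cb_def brs deriv[of "fst a"] deriv[of "snd a"] algebra_simps)
lemma cb_skew: "inner (cb a b) e = - inner b (cb (cj a) e)"
  by (cases b, cases e, simp add: cb_def cj_def inner_diff_left inner_add_left inner_diff_right inner_add_right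
      skew[of "fst a"] skew[of "snd a"] brs algebra_simps)
lemma cj_cj: "cj (cj a) = a" by (simp add: cj_def)
lemma cj_cb: "cj (cb a b) = cb (cj a) (cj b)"
  by (simp add: cj_def cb_def brs algebra_simps)
lemma cj_sc: "cj (sc z a) = sc (cnj z) (cj a)"
  by (simp add: cj_def sc_def J_def algebra_simps)
lemma sc_mult: "sc z (sc w a) = sc (z * w) a"
  by (simp add: sc_def J_add J_scale J_J algebra_simps)
lemma sc_1: "sc 1 a = a" by (simp add: sc_def)
lemma sc_add: "sc z (a + b) = sc z a + sc z b" by (simp add: sc_def J_add algebra_simps)
lemma sc_scale: "sc z (r *\<^sub>R a) = r *\<^sub>R sc z a" by (simp add: sc_def J_scale algebra_simps)
lemma sc_zero: "sc z 0 = 0" by (simp add: sc_def J_def pe)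
lemma sc_addc: "sc (z + w) a = sc z a + sc w a" by (simp add: sc_def algebra_simps)
lemma sc_0: "sc 0 a = 0" by (simp add: sc_def)
lemma sc_of_nat: "sc (of_nat n) a = real n *\<^sub>R a" by (simp add: sc_def)
lemma sc_sumc: "sc (sum f K) a = (\<Sum>k\<in>K. sc (f k) a)"
  by (induct K rule: infinite_finite_induct) (simp_all add: sc_0 sc_addc)
lemma sc_sum: "sc z (sum f K) = (\<Sum>k\<in>K. sc z (f k))"
  by (induct K rule: infinite_finite_induct) (simp_all add: sc_zero sc_add)
lemma cb_lsum: "cb (sum f K) b = (\<Sum>k\<in>K. cb (f k) b)"
  by (induct K rule: infinite_finite_induct) (simp_all add: cb_lzero cb_ladd)
lemma cb_rsum: "cb b (sum f K) = (\<Sum>k\<in>K. cb b (f k))"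
  by (induct K rule: infinite_finite_induct) (simp_all add: cb_rzero cb_radd)

end

locale HLA2 = HLA br for br :: "'a::real_inner \<Rightarrow> 'a \<Rightarrow> 'a" +
  fixes \<phi> :: "'a \<Rightarrow> 'a" and t :: "'a set" and z :: "'a set"
  assumes lin: "linear \<phi>" and hom: "\<And>x y. \<phi> (br x y) = br (\<phi> x) (\<phi> y)"
    and z_def: "z = {x. \<forall>y\<in>t. br x y = 0}"
    and tfix: "\<And>x. x \<in> t \<Longrightarrow> \<phi> x = x"
    and fixt: "\<And>x. x \<in> z \<Longrightarrow> \<phi> x = x \<Longrightarrow> x \<in> t"
begin

lemma z_add: "x \<in> z \<Longrightarrow> y \<in> z \<Longrightarrow> x + y \<in> z" by (simp add: z_def brs)
lemma z_scale: "x \<in> z \<Longrightarrow> r *\<^sub>R x \<in> z" by (simp add: z_def brs)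
lemma z_neg: "x \<in> z \<Longrightarrow> - x \<in> z" by (simp add: z_def brs)
lemma z_diff: "x \<in> z \<Longrightarrow> y \<in> z \<Longrightarrow> x - y \<in> z" by (simp add: z_def brs)
lemma z_0: "0 \<in> z" by (simp add: z_def brs)
lemma z_br: "x \<in> z \<Longrightarrow> y \<in> z \<Longrightarrow> br x y \<in> z"
proof -
  assume x: "x \<in> z" and y: "y \<in> z"
  have "br (br x y) s = 0" if s: "s \<in> t" for s
  proof -
    have "br (br x y) s = - br s (br x y)" by (rule anti)
    also have "br s (br x y) = br (br s x) y + br x (br s y)" by (rule deriv)
    also have "br s x = 0" using x s anti[of x s] by (simp add: z_def)
    also have "br s y = 0" using y s anti[of y s] by (simp add: z_def)
    finally show ?thesis by (simp add: brs)
  qed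
  then show ?thesis by (simp add: z_def)
qed
lemma z_phi: "x \<in> z \<Longrightarrow> \<phi> x \<in> z"
proof -
  assume x: "x \<in> z"
  have "br (\<phi> x) y = 0" if "y \<in> t" for y
  proof -
    have "br (\<phi> x) y = br (\<phi> x) (\<phi> y)" using tfix[OF that] by simp
    also have "\<dots> = \<phi> (br x y)" by (simp add: hom)
    also have "\<dots> = 0" using x that by (simp add: z_def linear_0[OF lin])
    finally show ?thesis .
  qed
  then show ?thesis by (simp add: z_def)
qed
lemma z_phipow: "x \<in> z \<Longrightarrow> (\<phi> ^^ m) x \<in> z"
  by (induct m) (simp_all add: z_phi)

definition zC where "zC = {a. fst a \<in> z \<and> snd a \<in> z}"
definition tC where "tC = {a. fst a \<in> t \<and> snd a \<in> t}"
definition phiC :: "'a \<times> 'a \<Rightarrow> 'a \<times> 'a" where "phiC a = (\<phi> (fst a), \<phi> (snd a))"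
definition Ev where "Ev w = {a \<in> zC. phiC a = sc w a}"

lemma zC_add: "a \<in> zC \<Longrightarrow> b \<in> zC \<Longrightarrow> a + b \<in> zC" by (simp add: zC_def z_add)
lemma zC_scale: "a \<in> zC \<Longrightarrow> r *\<^sub>R a \<in> zC" by (simp add: zC_def z_scale)
lemma zC_0: "0 \<in> zC" by (simp add: zC_def z_0)
lemma zC_J: "a \<in> zC \<Longrightarrow> J a \<in> zC" by (simp add: zC_def J_def z_neg)
lemma zC_cj: "a \<in> zC \<Longrightarrow> cj a \<in> zC" by (simp add: zC_def cj_def z_neg)
lemma zC_sc: "a \<in> zC \<Longrightarrow> sc w a \<in> zC" by (simp add: sc_def zC_add zC_scale zC_J)
lemma zC_cb: "a \<in> zC \<Longrightarrow> b \<in> zC \<Longrightarrow> cb a b \<in> zC"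
  by (simp add: zC_def cb_def z_add z_diff z_br)
lemma zC_cbpow: "a \<in> zC \<Longrightarrow> b \<in> zC \<Longrightarrow> (cb a ^^ m) b \<in> zC"
  by (induct m) (simp_all add: zC_cb)
lemma zC_sum: "(\<And>k. k \<in> K \<Longrightarrow> f k \<in> zC) \<Longrightarrow> sum f K \<in> zC"
  by (induct K rule: infinite_finite_induct) (simp_all add: zC_0 zC_add)
lemma zC_phipow: "a \<in> zC \<Longrightarrow> (phiC ^^ m) a \<in> zC"
  by (induct m) (simp_all add: zC_def phiC_def z_phi)

lemma central: "a \<in> zC \<Longrightarrow> c \<in> tC \<Longrightarrow> cb a c = 0"
proof -
  assume a: "a \<in> zC" and c: "c \<in> tC"
  have "fst a \<in> z" "snd a \<in> z" using a by (simp_all add: zC_def)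
  then have "\<forall>y\<in>t. br (fst a) y = 0" "\<forall>y\<in>t. br (snd a) y = 0"
    by (simp_all add: z_def)
  then show ?thesis using c by (simp add: tC_def cb_def pe)
qed

lemma phiC_cb: "phiC (cb a b) = cb (phiC a) (phiC b)"
  by (simp add: phiC_def cb_def hom linear_add[OF lin] linear_diff[OF lin])
lemma phiC_add: "phiC (a + b) = phiC a + phiC b" by (simp add: phiC_def linear_add[OF lin])
lemma phiC_scale: "phiC (r *\<^sub>R a) = r *\<^sub>R phiC a" by (simp add: phiC_def linear_scale[OF lin])
lemma phiC_J: "phiC (J a) = J (phiC a)" by (simp add: phiC_def J_def linear_neg[OF lin])
lemma phiC_cj: "phiC (cj a) = cj (phiC a)" by (simp add: phiC_def cj_def linear_neg[OF lin])
lemma phiC_sc: "phiC (sc w a) = sc w (phiC a)" by (simp add: sc_def phiC_add phiC_scale phiC_J)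
lemma phiC_0: "phiC 0 = 0" by (simp add: phiC_def linear_0[OF lin] pe)
lemma phiC_sum: "phiC (sum f K) = (\<Sum>k\<in>K. phiC (f k))"
  by (induct K rule: infinite_finite_induct) (simp_all add: phiC_0 phiC_add)
lemma phiC_pow: "(phiC ^^ m) a = ((\<phi> ^^ m) (fst a), (\<phi> ^^ m) (snd a))"
  by (induct m) (simp_all add: phiC_def)

lemma Ev_cb: "a \<in> Ev w \<Longrightarrow> b \<in> Ev v \<Longrightarrow> cb a b \<in> Ev (w * v)"
  by (simp add: Ev_def zC_cb phiC_cb cb_lsc cb_rsc sc_mult mult.commute)
lemma Ev_cj: "a \<in> Ev w \<Longrightarrow> cj a \<in> Ev (cnj w)"
  by (simp add: Ev_def zC_cj phiC_cj cj_sc)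
lemma Ev_1: "a \<in> Ev 1 \<Longrightarrow> a \<in> tC"
  by (simp add: Ev_def sc_1 tC_def zC_def phiC_def pe fixt)
lemma Ev_pow: "a \<in> Ev w \<Longrightarrow> b \<in> Ev v \<Longrightarrow> (cb a ^^ m) b \<in> Ev (w ^ m * v)"
proof (induct m)
  case 0 then show ?case by simp
next
  case (Suc m)
  then have "cb a ((cb a ^^ m) b) \<in> Ev (w * (w ^ m * v))" by (intro Ev_cb) auto
  then show ?case by (simp add: mult.assoc)
qed

lemma normal_step:
  assumes a: "a \<in> zC" and aa: "cb a (cj a) \<in> tC" and c: "c \<in> zC"
    and nn: "cb a (cb a c) = 0"
  shows "cb a c = 0"
proof -
  define N where "N = cb a"
  define M where "M = cb (cj a)"
  have comm: "N (M d) = M (N d)" if d: "d \<in> zC" for d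
  proof -
    have "N (M d) = cb (cb a (cj a)) d + M (N d)" unfolding N_def M_def by (rule cb_deriv)
    also have "cb (cb a (cj a)) d = 0" by (subst cb_anti) (simp add: central[OF d aa])
    finally show ?thesis by simp
  qed
  have n1: "inner (N d) (N d) = - inner d (M (N d))" for d
    unfolding N_def M_def by (rule cb_skew)
  have n2: "inner (M d) (M d) = - inner d (N (M d))" for d
    unfolding N_def M_def using cb_skew[of "cj a" d "cb (cj a) d"] by (simp add: cj_cj)
  have Nc: "N c \<in> zC" unfolding N_def using a c by (rule zC_cb)
  have "inner (M (N c)) (M (N c)) = inner (N (N c)) (N (N c))"
    using n1[of "N c"] n2[of "N c"] comm[OF Nc] by simp
  also have "\<dots> = 0" using nn by (simp add: N_def)
  finally have "M (N c) = 0" by simp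
  then have "inner (N c) (N c) = 0" using n1[of c] by simp
  then show ?thesis by (simp add: N_def)
qed

lemma normal_pow:
  assumes a: "a \<in> zC" and aa: "cb a (cj a) \<in> tC"
  shows "c \<in> zC \<Longrightarrow> (cb a ^^ Suc m) c = 0 \<Longrightarrow> cb a c = 0"
proof (induct m arbitrary: c)
  case 0 then show ?case by simp
next
  case (Suc m)
  have "(cb a ^^ Suc m) (cb a c) = 0" using Suc.prems(2) by (simp only: funpow_Suc_right o_def)
  then have "cb a (cb a c) = 0" using Suc.hyps[of "cb a c"] zC_cb[OF a Suc.prems(1)] by blast
  then show ?case using normal_step[OF a aa Suc.prems(1)] by blast
qed

lemma cmod1: "cmod w = 1 \<Longrightarrow> w * cnj w = 1"
  using complex_norm_square[of w] by simp

lemma L2: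
  assumes a: "a \<in> Ev w" and w: "cmod w = 1" and b: "b \<in> Ev v" and e: "w ^ m * v = 1"
  shows "cb a b = 0"
proof -
  have aC: "a \<in> zC" and bC: "b \<in> zC" using a b by (auto simp: Ev_def)
  have "cb a (cj a) \<in> Ev (w * cnj w)" using a by (intro Ev_cb Ev_cj)
  then have aa: "cb a (cj a) \<in> tC" using cmod1[OF w] by (simp add: Ev_1)
  have "(cb a ^^ m) b \<in> Ev 1" using Ev_pow[OF a b, of m] e by simp
  then have "(cb a ^^ m) b \<in> tC" by (rule Ev_1)
  then have "(cb a ^^ Suc m) b = 0" using central[OF aC] by simp
  then show ?thesis using normal_pow[OF aC aa bC] by blast
qed

lemma L3:
  assumes a: "a \<in> Ev w" and w: "cmod w = 1" and b: "b \<in> Ev v" and v: "cmod v = 1"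
    and e: "w * (w ^ m * v) ^ m' = 1"
  shows "cb a b = 0"
proof -
  have aC: "a \<in> zC" and bC: "b \<in> zC" using a b by (auto simp: Ev_def)
  have "cb a (cj a) \<in> Ev (w * cnj w)" using a by (intro Ev_cb Ev_cj)
  then have aa: "cb a (cj a) \<in> tC" using cmod1[OF w] by (simp add: Ev_1)
  have c: "(cb a ^^ m) b \<in> Ev (w ^ m * v)" using Ev_pow[OF a b] .
  have "cmod (w ^ m * v) = 1" using w v by (simp add: norm_mult norm_power)
  then have "cb ((cb a ^^ m) b) a = 0" using L2[OF c _ a] e by (simp add: mult.commute)
  then have "(cb a ^^ Suc m) b = 0" using cb_anti[of a "(cb a ^^ m) b"] by simp
  then show ?thesis using normal_pow[OF aC aa bC] by blast
qed

end

locale HLA3 = HLA2 br \<phi> t z for br :: "'a::real_inner \<Rightarrow> 'a \<Rightarrow> 'a" and \<phi> t z +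
  fixes N :: nat
  assumes Npos: "0 < N" and ord: "\<phi> ^^ N = id"
begin

definition om :: complex where "om = cis (2 * pi / real N)"

lemma om_N: "om ^ N = 1"
proof -
  have "om ^ N = cis (real N * (2 * pi / real N))" unfolding om_def by (rule Complex.DeMoivre)
  then show ?thesis using Npos by simp
qed
lemma om_cmod: "cmod om = 1" by (simp add: om_def)
lemma om_cnj: "om * cnj om = 1" by (rule cmod1[OF om_cmod])
lemma cnj_om_N: "cnj om ^ N = 1"
  by (metis complex_cnj_one complex_cnj_power om_N)

lemma root_sum:
  assumes m: "0 < m" "m < N"
  shows "(\<Sum>k<N. cnj om ^ (k * m)) = 0"
proof -
  define q where "q = cnj om ^ m"
  have "q = cis (- (2 * pi / real N)) ^ m" by (simp add: q_def om_def cis_cnj)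
  also have "\<dots> = cis (real m * (- (2 * pi / real N)))" by (rule Complex.DeMoivre)
  finally have q: "q = cis (- (real m * (2 * pi / real N)))" by simp
  have "q \<noteq> 1"
  proof
    assume "q = 1"
    then have "cos (real m * (2 * pi / real N)) = 1"
      using q by (metis cis.sel(1) cos_minus one_complex.sel(1))
    then obtain n :: int where n: "real m * (2 * pi / real N) = real_of_int n * 2 * pi"
      using cos_one_2pi_int by blast
    then have "real m / real N = real_of_int n" using Npos by (simp add: field_simps)
    moreover have "0 < real m / real N" "real m / real N < 1" using m by auto
    ultimately have "0 < real_of_int n" "real_of_int n < 1" by simp_all
    then have "0 < n" "n < 1" by simp_all
    then show False by simp
  qed
  have "(\<Sum>k<N. cnj om ^ (k * m)) = (\<Sum>k<N. q ^ k)"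
    by (simp add: q_def power_mult[symmetric] mult.commute)
  also have "\<dots> = (q ^ N - 1) / (q - 1)" using \<open>q \<noteq> 1\<close> by (rule geometric_sum)
  also have "q ^ N = 1" by (simp add: q_def power_mult[symmetric] mult.commute[of m] power_mult cnj_om_N)
  finally show ?thesis by simp
qed

definition P :: "nat \<Rightarrow> 'a \<times> 'a \<Rightarrow> 'a \<times> 'a" where
  "P k a = (\<Sum>m<N. sc (cnj om ^ (k * m)) ((phiC ^^ m) a))"

lemma phiC_N: "(phiC ^^ N) a = a"
  by (simp add: phiC_pow ord)

lemma P_Ev:
  assumes a: "a \<in> zC"
  shows "P k a \<in> Ev (om ^ k)"
proof -
  define G where "G m = sc (cnj om ^ (k * m)) ((phiC ^^ m) a)" for m
  have PG: "P k a = (\<Sum>m<N. G m)" by (simp add: P_def G_def)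
  have step: "phiC (G m) = sc (om ^ k) (G (Suc m))" for m
  proof -
    have "sc (om ^ k) (G (Suc m)) = sc (om ^ k * cnj om ^ (k * Suc m)) ((phiC ^^ Suc m) a)"
      by (simp add: G_def sc_mult)
    also have "om ^ k * cnj om ^ (k * Suc m) = (om * cnj om) ^ k * cnj om ^ (k * m)"
      by (simp add: power_add power_mult_distrib algebra_simps)
    also have "\<dots> = cnj om ^ (k * m)" by (simp add: om_cnj)
    finally show ?thesis by (simp add: G_def phiC_sc)
  qed
  have shift: "(\<Sum>m<N. G (Suc m)) = (\<Sum>m<N. G m)"
  proof -
    have "G N = G 0"
      by (simp add: G_def phiC_N power_mult cnj_om_N mult.commute[of k] power_mult[symmetric])
    then show ?thesis using sum.lessThan_Suc_shift[of G N] sum.lessThan_Suc[of G N] by simp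
  qed
  have "phiC (P k a) = sc (om ^ k) (P k a)"
    unfolding PG phiC_sum step sc_sum[symmetric] shift ..
  moreover have "P k a \<in> zC" unfolding P_def
    by (intro zC_sum zC_sc zC_phipow a)
  ultimately show ?thesis by (simp add: Ev_def)
qed

lemma sum_P: "(\<Sum>k<N. P k a) = real N *\<^sub>R a"
proof -
  have "(\<Sum>k<N. P k a) = (\<Sum>m<N. \<Sum>k<N. sc (cnj om ^ (k * m)) ((phiC ^^ m) a))"
    unfolding P_def by (rule sum.swap)
  also have "\<dots> = (\<Sum>m<N. sc (\<Sum>k<N. cnj om ^ (k * m)) ((phiC ^^ m) a))"
    by (simp add: sc_sumc)
  also have "\<dots> = (\<Sum>m<N. if m = 0 then real N *\<^sub>R a else 0)"
  proof (rule sum.cong[OF refl])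
    fix m assume "m \<in> {..<N}"
    then show "sc (\<Sum>k<N. cnj om ^ (k * m)) ((phiC ^^ m) a) = (if m = 0 then real N *\<^sub>R a else 0)"
      using root_sum[of m] by (auto simp: sc_of_nat sc_0)
  qed
  also have "\<dots> = real N *\<^sub>R a" using Npos by simp
  finally show ?thesis .
qed

lemma z_abelian:
  assumes x: "x \<in> z" and y: "y \<in> z"
  shows "br x y = 0"
proof -
  have aC: "(x, 0) \<in> zC" and bC: "(y, 0) \<in> zC" using x y by (simp_all add: zC_def z_0)
  have zero: "cb (P k (x, 0)) (P j (y, 0)) = 0" for k j
  proof -
    obtain m m' where d: "N dvd k + m' * (j + m * k)" using NT[OF Npos] by blast
    then obtain q where q: "k + m' * (j + m * k) = N * q" by (auto elim: dvdE)
    have "om ^ k * ((om ^ k) ^ m * om ^ j) ^ m' = om ^ (k + m' * (j + m * k))"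
      by (simp add: power_add power_mult[symmetric] algebra_simps)
    also have "\<dots> = 1" unfolding q by (simp add: power_mult om_N)
    finally have e: "om ^ k * ((om ^ k) ^ m * om ^ j) ^ m' = 1" .
    show ?thesis
      by (rule L3[OF P_Ev[OF aC] _ P_Ev[OF bC] _ e]) (simp_all add: norm_power om_cmod)
  qed
  have "cb (real N *\<^sub>R (x, 0)) (real N *\<^sub>R (y, 0)) = cb (\<Sum>k<N. P k (x, 0)) (\<Sum>j<N. P j (y, 0))"
    by (simp only: sum_P)
  also have "\<dots> = (\<Sum>j<N. \<Sum>k<N. cb (P k (x, 0)) (P j (y, 0)))"
    by (simp add: cb_lsum cb_rsum)
  also have "\<dots> = 0" by (simp add: zero)
  finally have "cb (real N *\<^sub>R (x, 0)) (real N *\<^sub>R (y, 0)) = 0" .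
  moreover have "cb (real N *\<^sub>R (x, 0)) (real N *\<^sub>R (y, 0)) = (real N * real N) *\<^sub>R cb (x, 0) (y, 0)"
    by (simp only: cb_lscale cb_rscale scaleR_scaleR mult.commute)
  ultimately have "(real N * real N) *\<^sub>R cb (x, 0) (y, 0) = 0" by simp
  then have "cb (x, 0) (y, 0) = 0" using Npos by simp
  moreover have "fst (cb (x, 0) (y, 0)) = br x y" by (simp add: cb_def bilinear_rzero[OF bil])
  ultimately show ?thesis by simp
qed

end

theorem lemmaD2:
  fixes br :: "'a::{real_inner,complete_space} \<Rightarrow> 'a \<Rightarrow> 'a"
    and \<phi> :: "'a \<Rightarrow> 'a" and t :: "'a set"
  assumes "hilbert_lie br"
    and "hl_automorphism br \<phi>"
    and "finite_order \<phi>"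
    and "maximal_abelian_in br (fixed_points \<phi>) t"
  shows "maximal_abelian_in br UNIV (centralizer br t)"
proof -
  note hl = assms(1)[unfolded hilbert_lie_def]
  have bil: "bilinear br" using hl by blast
  note brs = bilinear_ladd[OF bil] bilinear_radd[OF bil] bilinear_lmul[OF bil] bilinear_rmul[OF bil]
    bilinear_lneg[OF bil] bilinear_rneg[OF bil] bilinear_lzero[OF bil] bilinear_rzero[OF bil]
  interpret HLA br using hl by unfold_locales blast+
  have lin: "linear \<phi>" and hom: "\<And>x y. \<phi> (br x y) = br (\<phi> x) (\<phi> y)"
    using assms(2) by (auto simp: hl_automorphism_def)
  obtain n where n: "n > 0" "\<phi> ^^ n = id" using assms(3) by (auto simp: finite_order_def)
  have tab: "abelian_subalgebra br t" and tfp: "t \<subseteq> fixed_points \<phi>"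
    and tmax: "\<And>s. abelian_subalgebra br s \<Longrightarrow> t \<subseteq> s \<Longrightarrow> s \<subseteq> fixed_points \<phi> \<Longrightarrow> s = t"
    using assms(4) by (auto simp: maximal_abelian_in_def)
  have tsub: "subspace t" and tcomm: "\<And>x y. x \<in> t \<Longrightarrow> y \<in> t \<Longrightarrow> br x y = 0"
    using tab by (auto simp: abelian_subalgebra_def lie_subalgebra_def)
  have t0: "0 \<in> t" using tsub by (simp add: subspace_def)
  have tfix: "\<And>x. x \<in> t \<Longrightarrow> \<phi> x = x" using tfp by (auto simp: fixed_points_def)
  define z where zdef: "z = centralizer br t"
  have zd: "z = {x. \<forall>y\<in>t. br x y = 0}" by (simp add: zdef centralizer_def)
  have fixt: "x \<in> t" if xz: "x \<in> z" and xf: "\<phi> x = x" for x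
  proof -
    define s where "s = {u + c *\<^sub>R x | u c. u \<in> t}"
    have xt: "br x v = 0" if "v \<in> t" for v using xz that by (simp add: zd)
    have tx: "br v x = 0" if "v \<in> t" for v using xt[OF that] anti[of x v] by simp
    have sub: "subspace s"
      unfolding subspace_def
    proof (intro conjI ballI allI)
      show "0 \<in> s" unfolding s_def using t0 by (intro CollectI exI[of _ 0] exI[of _ "0::real"]) simp
    next
      fix a b assume "a \<in> s" "b \<in> s"
      obtain u c where 1: "a = u + c *\<^sub>R x" "u \<in> t" using \<open>a \<in> s\<close> by (auto simp: s_def)
      obtain v d where 2: "b = v + d *\<^sub>R x" "v \<in> t" using \<open>b \<in> s\<close> by (auto simp: s_def)
      from 1 2 show "a + b \<in> s" unfolding s_def using tsub
        by (intro CollectI exI[of _ "u + v"] exI[of _ "c + d"]) (auto simp: subspace_def algebra_simps)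
    next
      fix r a assume "a \<in> s"
      then obtain u c where "a = u + c *\<^sub>R x" "u \<in> t" by (auto simp: s_def)
      then show "r *\<^sub>R a \<in> s" unfolding s_def using tsub
        by (intro CollectI exI[of _ "r *\<^sub>R u"] exI[of _ "r * c"]) (auto simp: subspace_def algebra_simps)
    qed
    have comm: "br a b = 0" if as: "a \<in> s" "b \<in> s" for a b
    proof -
      obtain u c where 1: "a = u + c *\<^sub>R x" "u \<in> t" using as(1) unfolding s_def by blast
      obtain v d where 2: "b = v + d *\<^sub>R x" "v \<in> t" using as(2) unfolding s_def by blast
      from 1 2 show ?thesis by (simp add: brs tcomm xt tx alt)
    qed
    have "abelian_subalgebra br s"
      unfolding abelian_subalgebra_def lie_subalgebra_def
      using sub comm by (simp add: subspace_def)
    moreover have "t \<subseteq> s" unfolding s_def by (auto intro!: exI[of _ "0::real"])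
    moreover have "s \<subseteq> fixed_points \<phi>"
      unfolding s_def fixed_points_def
      by (auto simp: linear_add[OF lin] linear_scale[OF lin] xf tfix)
    ultimately have "s = t" by (rule tmax)
    moreover have "x \<in> s" unfolding s_def using t0 by (intro CollectI exI[of _ 0] exI[of _ "1::real"]) simp
    ultimately show ?thesis by simp
  qed
  have hla2: "HLA2 br \<phi> t z"
    unfolding HLA2_def HLA2_axioms_def
    using HLA_axioms lin hom zd tfix fixt by blast
  have hla3: "HLA3 br \<phi> t z n"
    unfolding HLA3_def HLA3_axioms_def using hla2 n by blast
  interpret HLA3 br \<phi> t z n by (rule hla3)
  have tz: "t \<subseteq> z" using tcomm by (auto simp: zd)
  have zsub: "subspace z" unfolding subspace_def by (simp add: z_0 z_add z_scale)
  have zab: "abelian_subalgebra br z"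
    unfolding abelian_subalgebra_def lie_subalgebra_def using zsub z_abelian z_0 by simp
  show ?thesis
    unfolding maximal_abelian_in_def zdef[symmetric]
  proof (intro conjI zab subset_UNIV allI impI)
    fix s assume s: "abelian_subalgebra br s \<and> z \<subseteq> s \<and> s \<subseteq> UNIV"
    have "s \<subseteq> z"
    proof
      fix x assume "x \<in> s"
      then have "br x y = 0" if "y \<in> t" for y using s that tz
        by (auto simp: abelian_subalgebra_def)
      then show "x \<in> z" by (simp add: zd)
    qed
    then show "s = z" using s by blast
  qed
qed

end
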